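(* Let $M,F$ be positive integers and $\epsilon>0$, and set $B=\frac{e^\epsilon+1}{e^\epsilon-1}\cdot MF$. Consider the randomized algorithm $\mathcal{A}$ which, on input a real matrix $G\in\mathbb{R}^{M\times F}$, does the following: (1) initialize $\tilde G=0\in\mathbb{R}^{M\times F}$; (2) sample a row index $i\in\{1,\dots,M\}$ uniformly at random; (3) project the row $G^{i}$ onto $[-1,1]$, i.e. replace each entry $G^{i,f}$ by $\max(-1,\min(1,G^{i,f}))$; (4) sample a column index $f\in\{1,\dots,F\}$ uniformly at random, independently of $i$; (5) sample a Bernoulli random variable $\beta$ with $$\Pr[\beta=1]=\frac{G^{i,f}(e^\epsilon-1)+e^\epsilon+1}{2e^\epsilon+2},$$ where $G^{i,f}$ denotes the projected value from step (3); (6) if $\beta=1$ set $\tilde G^{i,f}=B$, otherwise set $\tilde G^{i,f}=-B$; (7) output $\tilde G$. Then $\mathcal{A}$ is an $\epsilon$-local randomizer: for all inputs $G,G'\in\mathbb{R}^{M\times F}$ and every possible output $Y$, $$\Pr[\mathcal{A}(G)=Y]\le e^\epsilon\cdot\Pr[\mathcal{A}(G')=Y].$$ Equivalently, $\mathcal{A}$ satisfies $\epsilon$-local differential privacy.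
   Context: A randomized algorithm $\Phi:\mathcal{U}\to\mathcal{Y}$ is an $\epsilon$-local randomizer ($\epsilon>0$) if for all inputs $x,x'\in\mathcal{U}$ and all outputs $Y$ of $\Phi$, $\Pr[\Phi(x)=Y]\le e^\epsilon\Pr[\Phi(x')=Y]$. In the paper, the input $G$ is a user's item-embedding gradient matrix with $M$ items and $F$ latent factors, and the output is a privatized report that is nonzero in exactly one entry. *)

theory Defs
  imports "HOL-Probability.Probability"
begin

text \<open>A real M x F matrix is represented as a function nat => nat => real;
  only entries with row index < M and column index < F are meaningful
  (rows/columns indexed 0..M-1, 0..F-1 instead of 1..M, 1..F).\<close>
type_synonym matrix = "nat \<Rightarrow> nat \<Rightarrow> real"

definition clip :: "real \<Rightarrow> real" where
  "clip x = max (-1) (min 1 x)"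

definition scaleB :: "nat \<Rightarrow> nat \<Rightarrow> real \<Rightarrow> real" where
  "scaleB M F \<epsilon> = (exp \<epsilon> + 1) / (exp \<epsilon> - 1) * (real M * real F)"

definition mech :: "nat \<Rightarrow> nat \<Rightarrow> real \<Rightarrow> matrix \<Rightarrow> matrix pmf" where
  "mech M F \<epsilon> G =
     bind_pmf (pmf_of_set {0..<M}) (\<lambda>i.
     bind_pmf (pmf_of_set {0..<F}) (\<lambda>f.
     bind_pmf (bernoulli_pmf ((clip (G i f) * (exp \<epsilon> - 1) + exp \<epsilon> + 1) / (2 * exp \<epsilon> + 2)))
       (\<lambda>\<beta>. return_pmf (\<lambda>a b. if a = i \<and> b = f then (if \<beta> then scaleB M F \<epsilon> else - scaleB M F \<epsilon>) else 0))))"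

definition local_randomizer :: "real \<Rightarrow> 'a set \<Rightarrow> ('a \<Rightarrow> 'b pmf) \<Rightarrow> bool" where
  "local_randomizer \<epsilon> U \<Phi> \<longleftrightarrow>
     (\<forall>x\<in>U. \<forall>x'\<in>U. \<forall>Y. pmf (\<Phi> x) Y \<le> exp \<epsilon> * pmf (\<Phi> x') Y)"

end

theory Submission
  imports Defs
begin

lemma p_bounds:
  fixes e c :: real
  assumes e: "e > 1" and c: "-1 \<le> c" "c \<le> 1"
  defines "p \<equiv> (c * (e - 1) + e + 1) / (2 * e + 2)"
  shows "1 / (e + 1) \<le> p" "p \<le> e / (e + 1)"
proof -
  have d: "2 * e + 2 > 0" using e by simp
  have "(-1) * (e - 1) \<le> c * (e - 1)" using c e by (intro mult_right_mono) auto
  moreover have "c * (e - 1) \<le> 1 * (e - 1)" using c e by (intro mult_right_mono) auto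
  ultimately have n1: "2 \<le> c * (e - 1) + e + 1" and n2: "c * (e - 1) + e + 1 \<le> 2 * e" by auto
  have "2 / (2 * e + 2) \<le> p" unfolding p_def using n1 d by (intro divide_right_mono) auto
  moreover have "2 / (2 * e + 2) = 1 / (e + 1)" using e by (simp add: field_simps)
  ultimately show "1 / (e + 1) \<le> p" by simp
  have "p \<le> (2 * e) / (2 * e + 2)" unfolding p_def using n2 d by (intro divide_right_mono) auto
  moreover have "(2 * e) / (2 * e + 2) = e / (e + 1)" using e by (simp add: field_simps)
  ultimately show "p \<le> e / (e + 1)" by simp
qed

lemma clip_bounds: "-1 \<le> clip x" "clip x \<le> 1"
  unfolding clip_def by auto

lemma ratio:
  fixes e p q :: real
  assumes e: "e > 1" and "1 / (e + 1) \<le> p" "p \<le> e / (e + 1)"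
    "1 / (e + 1) \<le> q" "q \<le> e / (e + 1)"
  shows "p \<le> e * q" "1 - p \<le> e * (1 - q)"
proof -
  have "e / (e+1) = e * (1/(e+1))" by simp
  also have "\<dots> \<le> e * q" using assms by (intro mult_left_mono) auto
  finally show "p \<le> e * q" using assms by linarith
  have "1 - p \<le> e / (e+1)" using assms e by (simp add: field_simps)
  moreover have "1/(e+1) \<le> 1 - q" using assms e by (simp add: field_simps)
  moreover have "e * (1/(e+1)) \<le> e * (1 - q)"
    using calculation(2) e by (intro mult_left_mono) auto
  ultimately show "1 - p \<le> e * (1 - q)" by simp
qed

theorem theorem1:
  fixes M F :: nat and \<epsilon> :: real
  assumes "M > 0" and "F > 0" and "\<epsilon> > 0"
  shows "local_randomizer \<epsilon> UNIV (mech M F \<epsilon>)"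
proof -
  define e where "e = exp \<epsilon>"
  have e1: "e > 1" using assms(3) unfolding e_def by simp
  define p where "p G i f = (clip (G i f) * (e - 1) + e + 1) / (2 * e + 2)" for G :: matrix and i f
  define out where "out i f \<beta> = (\<lambda>a b. if a = i \<and> b = f then (if \<beta> then scaleB M F \<epsilon> else - scaleB M F \<epsilon>) else (0::real))" for i f :: nat and \<beta>
  have pb: "1 / (e + 1) \<le> p G i f" "p G i f \<le> e / (e + 1)" for G i f
    using p_bounds[OF e1 clip_bounds] unfolding p_def by auto
  have p01: "0 \<le> p G i f" "p G i f \<le> 1" for G i f
  proof -
    have "0 \<le> 1 / (e+1)" using e1 by simp
    then show "0 \<le> p G i f" using pb(1)[of G i f] by linarith
    have "e / (e+1) \<le> 1" using e1 by simp
    then show "p G i f \<le> 1" using pb(2)[of G i f] by linarith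
  qed
  have form: "pmf (mech M F \<epsilon> G) Y = (\<Sum>i\<in>{0..<M}. (\<Sum>f\<in>{0..<F}.
      indicator {Y} (out i f True) * p G i f + indicator {Y} (out i f False) * (1 - p G i f)) / real F) / real M"
    for G Y
  proof -
    have ne: "{0..<M} \<noteq> {}" "{0..<F} \<noteq> {}" using assms by auto
    have bern: "pmf (bernoulli_pmf (p G i f) \<bind> (\<lambda>\<beta>. return_pmf (out i f \<beta>))) Y =
       indicator {Y} (out i f True) * p G i f + indicator {Y} (out i f False) * (1 - p G i f)" for i f
      unfolding pmf_bind using p01[of G i f] by simp
    show ?thesis
      unfolding mech_def pmf_bind_pmf_of_set[OF ne(1) finite_atLeastLessThan]
        pmf_bind_pmf_of_set[OF ne(2) finite_atLeastLessThan]
      using bern unfolding p_def out_def e_def by simp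
  qed
  show ?thesis
    unfolding local_randomizer_def
  proof (intro ballI allI)
    fix G G' :: matrix and Y
    have "pmf (mech M F \<epsilon> G) Y \<le> (\<Sum>i\<in>{0..<M}. (\<Sum>f\<in>{0..<F}.
      e * (indicator {Y} (out i f True) * p G' i f + indicator {Y} (out i f False) * (1 - p G' i f))) / real F) / real M"
      unfolding form
    proof (intro divide_right_mono sum_mono)
      fix i f
      have r: "p G i f \<le> e * p G' i f" "1 - p G i f \<le> e * (1 - p G' i f)"
        using ratio[OF e1 pb pb] by auto
      show "indicator {Y} (out i f True) * p G i f + indicator {Y} (out i f False) * (1 - p G i f)
        \<le> e * (indicator {Y} (out i f True) * p G' i f + indicator {Y} (out i f False) * (1 - p G' i f))"
        using r by (simp add: indicator_def algebra_simps)
    qed auto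
    also have "\<dots> = e * pmf (mech M F \<epsilon> G') Y"
      unfolding form by (simp add: sum_distrib_left[symmetric] sum_divide_distrib[symmetric])
    finally show "pmf (mech M F \<epsilon> G) Y \<le> exp \<epsilon> * pmf (mech M F \<epsilon> G') Y" unfolding e_def .
  qed
qed

end
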